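(* Let $s\ge2$, $\delta\ge2$, and let $\mathcal{C}$ be an $[n,k,d]_q$ linear code with multiple $(r_i,\delta)_{i\in[s]}$ localities (i.e. $\delta_1=\dots=\delta_s=\delta$) with respect to a partition $\mathcal{T}_1,\dots,\mathcal{T}_s$ of $[n]$, $n_i=|\mathcal{T}_i|$, $r_1\le\dots\le r_s$. Let $\Delta_0=0$ and $\Delta_j=\sum_{i=1}^{j}\lceil n_i/(r_i+\delta-1)\rceil(\delta-1)$ for $j=1,\dots,s-1$. Suppose $\sum_{i=1}^{s-1}r_i\lceil n_i/(r_i+\delta-1)\rceil\le k-1$ and, for each $j=1,\dots,s-1$, $$r_j\left\lceil\frac{\Delta_j-\Delta_{j-1}-1}{\delta-1}\right\rceil+(\Delta_j-\Delta_{j-1}-1)<n_j.$$ Then $d\le n-k+1-(\Gamma-1)(\delta-1)$, where $$\Gamma=\sum_{i=1}^{s-1}\left\lceil\frac{n_i}{r_i+\delta-1}\right\rceil+\left\lceil\frac{k-\sum_{i=1}^{s-1}r_i\lceil n_i/(r_i+\delta-1)\rceil}{r_s}\right\rceil.$$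
   Context: $[n]=\{1,\dots,n\}$. For an $[n,k,d]_q$ linear code with generator matrix columns $\vec g_1,\dots,\vec g_n$, a regenerating set of coordinate $i$ is a (minimal) subset $R\subseteq[n]$ with $i\in R$ such that $\vec g_i$ is an $\mathbb{F}_q$-linear combination of $\{\vec g_j\}_{j\in R\setminus\{i\}}$ and no proper subset of $R\setminus\{i\}$ suffices; $\mathcal{R}_i$ is the set of regenerating sets of coordinate $i$. Multiple $(r_i,\delta)_{i\in[s]}$ localities: $\mathcal{T}_1,\dots,\mathcal{T}_s$ is a partition of $[n]$, $r_1\le\dots\le r_s$ are integers, and for each $i\in[s]$ and each $\iota\in\mathcal{T}_i$ there is $S_\iota\subseteq\mathcal{T}_i$ with $\iota\in S_\iota$, $\delta\le|S_\iota|\le r_i+\delta-1$, such that for every $E\subseteq S_\iota$ with $|E|=\delta-1$ and every $j\in E$, $(S_\iota\setminus E)\cup\{j\}\in\mathcal{R}_j$. *)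

theory Defs
  imports Complex_Main
begin

text \<open>A linear code of length n and dimension k over a finite field 'a is given by a
k x n generator matrix G, with G t j the entry in row t (t < k) and column j (j in {1..n}).\<close>

definition in_col_span :: "(nat \<Rightarrow> nat \<Rightarrow> 'a::field) \<Rightarrow> nat \<Rightarrow> nat set \<Rightarrow> nat \<Rightarrow> bool" where
  "in_col_span G k S i \<longleftrightarrow> (\<exists>c. \<forall>t<k. G t i = (\<Sum>j\<in>S. c j * G t j))"

definition regenerating_set :: "(nat \<Rightarrow> nat \<Rightarrow> 'a::field) \<Rightarrow> nat \<Rightarrow> nat \<Rightarrow> nat \<Rightarrow> nat set \<Rightarrow> bool" where
  "regenerating_set G k n i R \<longleftrightarrow> i \<in> R \<and> R \<subseteq> {1..n} \<and> in_col_span G k (R - {i}) i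
     \<and> (\<forall>S. S \<subset> R - {i} \<longrightarrow> \<not> in_col_span G k S i)"

definition codeword :: "(nat \<Rightarrow> nat \<Rightarrow> 'a::field) \<Rightarrow> nat \<Rightarrow> (nat \<Rightarrow> 'a) \<Rightarrow> nat \<Rightarrow> 'a" where
  "codeword G k m j = (\<Sum>t<k. m t * G t j)"

definition code :: "(nat \<Rightarrow> nat \<Rightarrow> 'a::field) \<Rightarrow> nat \<Rightarrow> nat \<Rightarrow> (nat \<Rightarrow> 'a) set" where
  "code G k n = {c. \<exists>m. \<forall>j. c j = (if j \<in> {1..n} then codeword G k m j else 0)}"

definition hweight :: "nat \<Rightarrow> (nat \<Rightarrow> 'a::zero) \<Rightarrow> nat" where
  "hweight n c = card {j\<in>{1..n}. c j \<noteq> 0}"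

definition is_linear_code :: "(nat \<Rightarrow> nat \<Rightarrow> 'a::field) \<Rightarrow> nat \<Rightarrow> nat \<Rightarrow> nat \<Rightarrow> bool" where
  "is_linear_code G n k d \<longleftrightarrow>
     1 \<le> k \<and> k \<le> n \<and>
     (\<forall>m. (\<forall>j\<in>{1..n}. codeword G k m j = 0) \<longrightarrow> (\<forall>t<k. m t = 0)) \<and>
     d = Min (hweight n ` (code G k n - {\<lambda>_. 0}))"

definition is_partition :: "nat \<Rightarrow> nat \<Rightarrow> (nat \<Rightarrow> nat set) \<Rightarrow> bool" where
  "is_partition n s T \<longleftrightarrow>
     (\<forall>i\<in>{1..s}. T i \<noteq> {}) \<and>
     (\<forall>i\<in>{1..s}. \<forall>j\<in>{1..s}. i \<noteq> j \<longrightarrow> T i \<inter> T j = {}) \<and>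
     (\<Union>i\<in>{1..s}. T i) = {1..n}"

definition multiple_localities ::
  "(nat \<Rightarrow> nat \<Rightarrow> 'a::field) \<Rightarrow> nat \<Rightarrow> nat \<Rightarrow> nat \<Rightarrow> (nat \<Rightarrow> nat set) \<Rightarrow> (nat \<Rightarrow> nat) \<Rightarrow> nat \<Rightarrow> bool" where
  "multiple_localities G n k s T r \<delta> \<longleftrightarrow>
     is_partition n s T \<and>
     (\<forall>i j. 1 \<le> i \<longrightarrow> i \<le> j \<longrightarrow> j \<le> s \<longrightarrow> r i \<le> r j) \<and>
     (\<forall>i\<in>{1..s}. \<forall>\<iota>\<in>T i. \<exists>S. S \<subseteq> T i \<and> \<iota> \<in> S \<and> \<delta> \<le> card S \<and> card S \<le> r i + \<delta> - 1 \<and>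
        (\<forall>E. E \<subseteq> S \<longrightarrow> card E = \<delta> - 1 \<longrightarrow>
           (\<forall>j\<in>E. regenerating_set G k n j ((S - E) \<union> {j}))))"

end

theory Submission imports Defs "HOL-Library.FuncSet" "HOL-Library.Cardinality" begin

definition Msg :: "nat \<Rightarrow> (nat \<Rightarrow> 'a::zero) set" where
  "Msg k = {m. \<forall>t. k \<le> t \<longrightarrow> m t = 0}"

definition VV :: "(nat \<Rightarrow> nat \<Rightarrow> 'a::field) \<Rightarrow> nat \<Rightarrow> nat set \<Rightarrow> (nat \<Rightarrow> 'a) set" where
  "VV G k X = {m \<in> Msg k. \<forall>j\<in>X. codeword G k m j = 0}"

definition detm :: "(nat \<Rightarrow> nat \<Rightarrow> 'a::field) \<Rightarrow> nat \<Rightarrow> nat set \<Rightarrow> nat \<Rightarrow> bool" where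
  "detm G k X e \<longleftrightarrow> (\<forall>m\<in>VV G k X. codeword G k m e = 0)"

definition regenprop :: "(nat \<Rightarrow> nat \<Rightarrow> 'a::field) \<Rightarrow> nat \<Rightarrow> nat \<Rightarrow> nat \<Rightarrow> nat set \<Rightarrow> bool" where
  "regenprop G k n \<delta> S \<longleftrightarrow> (\<forall>E. E \<subseteq> S \<longrightarrow> card E = \<delta> - 1 \<longrightarrow>
           (\<forall>j\<in>E. regenerating_set G k n j ((S - E) \<union> {j})))"

lemma codeword_diff: "codeword G k (\<lambda>t. m t - m0 t) j = codeword G k m j - codeword G k m0 j"
  unfolding codeword_def by (simp add: left_diff_distrib sum_subtractf)

lemma Msg_eq: "Msg k = (\<lambda>f t. if t < k then f t else 0) ` ({..<k} \<rightarrow>\<^sub>E (UNIV::'a::zero set))"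
proof
  show "Msg k \<subseteq> (\<lambda>f t. if t < k then f t else 0) ` ({..<k} \<rightarrow>\<^sub>E (UNIV::'a set))"
  proof
    fix m :: "nat \<Rightarrow> 'a" assume m: "m \<in> Msg k"
    have eq: "m = (\<lambda>t. if t < k then restrict m {..<k} t else 0)"
      using m by (auto simp: Msg_def fun_eq_iff)
    show "m \<in> (\<lambda>f t. if t < k then f t else 0) ` ({..<k} \<rightarrow>\<^sub>E (UNIV::'a set))"
    proof (rule image_eqI[where x="restrict m {..<k}"])
      show "m = (\<lambda>t. if t < k then restrict m {..<k} t else 0)" by (rule eq)
    qed simp
  qed
qed (auto simp: Msg_def)

lemma finite_Msg: "finite (Msg k :: (nat \<Rightarrow> 'a::{zero,finite}) set)"
  unfolding Msg_eq by (intro finite_imageI finite_PiE) auto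

lemma card_Msg: "card (Msg k :: (nat \<Rightarrow> 'a::{zero,finite}) set) = CARD('a) ^ k"
proof -
  have "inj_on (\<lambda>f t. if t < k then f t else (0::'a)) ({..<k} \<rightarrow>\<^sub>E (UNIV::'a set))"
  proof (rule inj_onI)
    fix f g assume f: "f \<in> {..<k} \<rightarrow>\<^sub>E (UNIV::'a set)" and g: "g \<in> {..<k} \<rightarrow>\<^sub>E (UNIV::'a set)"
      and e: "(\<lambda>t. if t < k then f t else 0) = (\<lambda>t. if t < k then g t else 0)"
    show "f = g"
    proof
      fix t show "f t = g t"
      proof (cases "t < k")
        case True then show ?thesis using fun_cong[OF e, of t] by simp
      next
        case False then show ?thesis using PiE_arb[OF f] PiE_arb[OF g] by simp
      qed
    qed
  qed
  then show ?thesis unfolding Msg_eq by (simp add: card_image card_PiE)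
qed

lemma finite_VV: "finite (VV G k X :: (nat \<Rightarrow> 'a::{field,finite}) set)"
  by (rule finite_subset[OF _ finite_Msg]) (auto simp: VV_def)

lemma VV_mono: "X \<subseteq> Y \<Longrightarrow> VV G k Y \<subseteq> VV G k X"
  by (auto simp: VV_def)

lemma VV_empty: "VV G k {} = Msg k" by (simp add: VV_def)

lemma card_VV_insert:
  fixes G :: "nat \<Rightarrow> nat \<Rightarrow> 'a::{field,finite}"
  shows "card (VV G k X) \<le> CARD('a) * card (VV G k (insert e X))"
proof -
  let ?K = "VV G k (insert e X)"
  define F where "F = (\<lambda>c. {m\<in>VV G k X. codeword G k m e = c})"
  have eqF: "VV G k X = (\<Union>c\<in>UNIV. F c)" unfolding F_def by blast
  have "card (\<Union>c\<in>UNIV. F c) \<le> (\<Sum>c\<in>UNIV. card (F c))"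
    by (rule card_UN_le) simp
  then have 1: "card (VV G k X) \<le> (\<Sum>c\<in>UNIV. card (F c))"
    by (subst eqF)
  have 2: "card (F c) \<le> card ?K" for c
  proof (cases "F c = {}")
    case True
    then have "card (F c) = 0" by (simp only: card.empty)
    then show ?thesis by (simp only: le0)
  next
    case False then obtain m0 where m0: "m0 \<in> F c" by blast
    have inj: "inj_on (\<lambda>m t. m t - m0 t) (F c)"
    proof (rule inj_onI)
      fix x y assume "(\<lambda>t. x t - m0 t) = (\<lambda>t. y t - m0 t)"
      then show "x = y" by (simp add: fun_eq_iff)
    qed
    have sub: "(\<lambda>m t. m t - m0 t) ` F c \<subseteq> ?K"
    proof
      fix z assume "z \<in> (\<lambda>m t. m t - m0 t) ` F c"
      then obtain m where m: "m \<in> F c" and z: "z = (\<lambda>t. m t - m0 t)" by blast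
      show "z \<in> ?K"
        using m m0 unfolding z F_def VV_def Msg_def by (simp add: codeword_diff)
    qed
    show ?thesis by (rule card_inj_on_le[OF inj sub finite_VV])
  qed
  have "(\<Sum>c\<in>UNIV. card (F c)) \<le> (\<Sum>c\<in>(UNIV::'a set). card ?K)"
    by (rule sum_mono) (rule 2)
  also have "\<dots> = CARD('a) * card ?K" by simp
  finally show ?thesis using 1 by linarith
qed

lemma card_VV_union:
  fixes G :: "nat \<Rightarrow> nat \<Rightarrow> 'a::{field,finite}"
  shows "finite Y \<Longrightarrow> card (VV G k X) \<le> CARD('a) ^ card Y * card (VV G k (X \<union> Y))"
proof (induction Y rule: finite_induct)
  case empty then show ?case by simp
next
  case (insert y Y)
  have "card (VV G k X) \<le> CARD('a) ^ card Y * card (VV G k (X \<union> Y))" by (rule insert.IH)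
  also have "\<dots> \<le> CARD('a) ^ card Y * (CARD('a) * card (VV G k (insert y (X \<union> Y))))"
    by (intro mult_left_mono card_VV_insert) auto
  finally show ?case using insert.hyps by (simp add: ac_simps)
qed

lemma VV_det_union: "\<forall>e\<in>Y. detm G k X e \<Longrightarrow> VV G k (X \<union> Y) = VV G k X"
  by (auto simp: VV_def detm_def)

lemma detm_mem: "e \<in> X \<Longrightarrow> detm G k X e"
  by (auto simp: VV_def detm_def)

lemma span_detm:
  assumes "in_col_span G k B e" "B \<subseteq> X"
  shows "detm G k X e"
  unfolding detm_def
proof
  fix m assume m: "m \<in> VV G k X"
  obtain c where c: "\<forall>t<k. G t e = (\<Sum>j\<in>B. c j * G t j)"
    using assms(1) unfolding in_col_span_def by blast
  have "codeword G k m e = (\<Sum>t<k. m t * (\<Sum>j\<in>B. c j * G t j))"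
    unfolding codeword_def using c by (intro sum.cong) auto
  also have "\<dots> = (\<Sum>t<k. \<Sum>j\<in>B. c j * (m t * G t j))"
    by (simp add: sum_distrib_left mult.left_commute)
  also have "\<dots> = (\<Sum>j\<in>B. c j * codeword G k m j)"
    unfolding codeword_def by (subst sum.swap) (simp add: sum_distrib_left)
  also have "\<dots> = 0"
    using m assms(2) by (auto simp: VV_def intro!: sum.neutral)
  finally show "codeword G k m e = 0" .
qed

lemma no_det_exists:
  assumes "2 \<le> card (VV G k X)"
    and indep: "\<forall>m. (\<forall>j\<in>{1..n}. codeword G k m j = 0) \<longrightarrow> (\<forall>t<k. m t = 0)"
  shows "\<exists>e\<in>{1..n}. \<not> detm G k X e"
proof (rule ccontr)
  assume "\<not> ?thesis"
  then have all: "\<forall>e\<in>{1..n}. detm G k X e" by blast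
  have sub: "VV G k X \<subseteq> {\<lambda>_. 0}"
  proof
    fix m assume m: "m \<in> VV G k X"
    have A: "\<forall>t<k. m t = 0" using indep all m by (auto simp: detm_def)
    have B: "\<forall>t. k \<le> t \<longrightarrow> m t = 0" using m by (auto simp: VV_def Msg_def)
    have "m = (\<lambda>_. 0)"
    proof (rule ext)
      fix t show "m t = 0" using A B by (cases "t < k") auto
    qed
    then show "m \<in> {\<lambda>_. 0}" by simp
  qed
  then have "card (VV G k X) \<le> 1"
    using card_mono[OF _ sub] by simp
  with assms(1) show False by simp
qed

lemma pow_card: "2 \<le> (q::nat) \<Longrightarrow> q ^ k \<le> q ^ b * N \<Longrightarrow> b < k \<Longrightarrow> 2 \<le> N"
proof (rule ccontr)
  assume q: "2 \<le> q" and h: "q ^ k \<le> q ^ b * N" and bk: "b < k" and "\<not> 2 \<le> N"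
  then have "N \<le> 1" by simp
  then have "q ^ b * N \<le> q ^ b" by simp
  also have "\<dots> < q ^ k" using q bk by (intro power_strict_increasing) auto
  finally show False using h by simp
qed


lemma cover:
  assumes reg: "regenprop G k n \<delta> S" and fS: "finite S" and B: "B \<subseteq> S"
    and cB: "card B + (\<delta> - 1) = card S" and j: "j \<in> S - B" and BZ: "B \<subseteq> Z"
  shows "detm G k Z j"
proof -
  let ?E = "S - B"
  have cE: "card ?E = \<delta> - 1" using card_Diff_subset[OF finite_subset[OF B fS] B] cB by simp
  have "regenerating_set G k n j ((S - ?E) \<union> {j})"
    using reg cE j unfolding regenprop_def by blast
  then have ic: "in_col_span G k ((S - ?E) \<union> {j} - {j}) j"
    unfolding regenerating_set_def by blast
  have eqB: "(S - ?E) \<union> {j} - {j} = B" using B j by auto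
  show ?thesis using ic[unfolded eqB] BZ by (rule span_detm)
qed

lemma card_split: "finite S \<Longrightarrow> card S = card (S \<inter> X) + card (S - X)"
  by (rule card_Int_Diff)

lemma step:
  fixes G :: "nat \<Rightarrow> nat \<Rightarrow> 'a::{field,finite}"
  assumes reg: "regenprop G k n \<delta> S" and fS: "finite S" and iota: "\<iota> \<in> S" and dS: "\<delta> \<le> card S"
    and fX: "finite X" and nd: "\<not> detm G k X \<iota>"
  shows "\<delta> \<le> card (S - X) \<and>
    card (VV G k X) \<le> CARD('a) ^ (card (S - X) - (\<delta> - 1)) * card (VV G k (X \<union> S))"
proof -
  have cS: "card S = card (S \<inter> X) + card (S - X)" using card_split[OF fS] .
  have 1: "\<delta> \<le> card (S - X)"
  proof (rule ccontr)
    assume "\<not> \<delta> \<le> card (S - X)"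
    then have "card S - (\<delta> - 1) \<le> card (S \<inter> X)" using cS by linarith
    then obtain B where B: "B \<subseteq> S \<inter> X" "card B = card S - (\<delta> - 1)"
      by (meson obtain_subset_with_card_n)
    show False
    proof (cases "\<iota> \<in> B")
      case True then show False using B nd detm_mem by blast
    next
      case False
      have "detm G k X \<iota>"
        by (rule cover[OF reg fS, of B]) (use B dS False iota in auto)
      then show False using nd by blast
    qed
  qed
  have "card (S - X) - (\<delta> - 1) \<le> card (S - X)" by simp
  then obtain A where A: "A \<subseteq> S - X" "card A = card (S - X) - (\<delta> - 1)" "finite A"
    by (meson obtain_subset_with_card_n)
  let ?B = "(S \<inter> X) \<union> A"
  have "card ?B = card (S \<inter> X) + card A"
    using A fS by (intro card_Un_disjoint) (auto intro: finite_subset)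
  then have cB: "card ?B + (\<delta> - 1) = card S" using A(2) cS 1 by simp
  have det: "\<forall>j\<in>S - ?B. detm G k (X \<union> A) j"
  proof
    fix j assume j: "j \<in> S - ?B"
    show "detm G k (X \<union> A) j" by (rule cover[OF reg fS _ cB j]) (use A in auto)
  qed
  have eq: "X \<union> S = (X \<union> A) \<union> (S - ?B)" using A by auto
  have "VV G k (X \<union> S) = VV G k (X \<union> A)"
    unfolding eq by (rule VV_det_union[OF det])
  moreover have "card (VV G k X) \<le> CARD('a) ^ card A * card (VV G k (X \<union> A))"
    by (rule card_VV_union[OF A(3)])
  ultimately show ?thesis using 1 A(2) by simp
qed

lemma phase_arith:
  fixes c m p t r D :: nat
  assumes "c \<le> m*r" "c + m*D \<le> p" "p \<le> t*(r+D)" "r*(t-1) + t*D \<le> p"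
  shows "c \<le> r*t \<and> t*D + c \<le> p"
proof
  show "c \<le> r*t"
  proof (cases "m \<le> t")
    case True then have "m*r \<le> t*r" by (rule mult_le_mono1)
    then have "c \<le> t*r" using assms(1) by linarith
    then show ?thesis by (simp add: mult.commute)
  next
    case False then have "t*D \<le> m*D" by (intro mult_le_mono1) simp
    moreover have h3: "p \<le> t*r + t*D" using assms(3) by (simp add: algebra_simps)
    ultimately have "c \<le> t*r" using assms(2) by linarith
    then show ?thesis by (simp add: mult.commute)
  qed
  show "t*D + c \<le> p"
  proof (cases "t \<le> m")
    case True then have "t*D \<le> m*D" by (rule mult_le_mono1)
    then show ?thesis using assms by linarith
  next
    case False then have "m \<le> t - 1" by simp
    then have "m*r \<le> (t-1)*r" by (rule mult_le_mono1)
    then have "c \<le> (t-1)*r" using assms(1) by linarith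
    moreover have "r*(t-1) = (t-1)*r" by (rule mult.commute)
    ultimately have "c \<le> r*(t-1)" by linarith
    then show ?thesis using assms(4) by linarith
  qed
qed


lemma phase:
  fixes G :: "nat \<Rightarrow> nat \<Rightarrow> 'a::{field,finite}"
  assumes loc: "\<forall>\<iota>\<in>P. \<exists>S. S \<subseteq> P \<and> \<iota> \<in> S \<and> \<delta> \<le> card S \<and> card S \<le> r + \<delta> - 1 \<and> regenprop G k n \<delta> S"
    and fP: "finite P" and fX: "finite X0" and disj: "X0 \<inter> P = {}" and d1: "1 \<le> \<delta>"
  shows "W \<subseteq> P \<Longrightarrow> card (VV G k X0) \<le> CARD('a) ^ c * card (VV G k (X0 \<union> W)) \<Longrightarrow>
    c \<le> m * r \<Longrightarrow> c + m * (\<delta> - 1) \<le> card W \<Longrightarrow>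
    \<exists>c' m'. card (VV G k X0) \<le> CARD('a) ^ c' * card (VV G k (X0 \<union> P)) \<and> c' \<le> m' * r \<and>
      c' + m' * (\<delta> - 1) \<le> card P"
proof (induction "card (P - W)" arbitrary: W c m rule: less_induct)
  case less
  show ?case
  proof (cases "\<forall>e\<in>P - W. detm G k (X0 \<union> W) e")
    case True
    have eq: "X0 \<union> P = (X0 \<union> W) \<union> (P - W)" using less.prems(1) by auto
    have "VV G k (X0 \<union> P) = VV G k (X0 \<union> W)" unfolding eq by (rule VV_det_union[OF True])
    moreover have "card W \<le> card P" using less.prems(1) fP by (rule card_mono[rotated])
    ultimately show ?thesis using less.prems by (intro exI[of _ c] exI[of _ m]) auto
  next
    case False
    then obtain \<iota> where iota: "\<iota> \<in> P - W" "\<not> detm G k (X0 \<union> W) \<iota>" by blast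
    obtain S where S: "S \<subseteq> P" "\<iota> \<in> S" "\<delta> \<le> card S" "card S \<le> r + \<delta> - 1" "regenprop G k n \<delta> S"
      using loc iota(1) by blast
    have fS: "finite S" using S(1) fP by (rule finite_subset)
    have fW: "finite W" using less.prems(1) fP by (rule finite_subset)
    have fZ: "finite (X0 \<union> W)" using fX fW by simp
    have st: "\<delta> \<le> card (S - (X0 \<union> W))"
      "card (VV G k (X0 \<union> W)) \<le> CARD('a) ^ (card (S - (X0 \<union> W)) - (\<delta> - 1)) * card (VV G k ((X0 \<union> W) \<union> S))"
      using step[OF S(5) fS S(2) S(3) fZ iota(2)] by auto
    have SZ: "S - (X0 \<union> W) = S - W" using S(1) disj by auto
    have WS: "W \<union> S = W \<union> (S - W)" by auto
    have cW: "card (W \<union> S) = card W + card (S - W)"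
      unfolding WS using fW fS by (intro card_Un_disjoint) auto
    have sub: "P - (W \<union> S) \<subset> P - W" using iota(1) S(2) by auto
    have lt: "card (P - (W \<union> S)) < card (P - W)"
      by (rule psubset_card_mono) (use fP sub in auto)
    let ?d = "card (S - W) - (\<delta> - 1)"
    have "card (VV G k X0) \<le> CARD('a) ^ c * card (VV G k (X0 \<union> W))" by (rule less.prems(2))
    also have "\<dots> \<le> CARD('a) ^ c * (CARD('a) ^ ?d * card (VV G k (X0 \<union> (W \<union> S))))"
      using st(2) unfolding SZ by (intro mult_left_mono) (auto simp: Un_assoc)
    also have "\<dots> = CARD('a) ^ (c + ?d) * card (VV G k (X0 \<union> (W \<union> S)))"
      by (simp add: power_add)
    finally have A1: "card (VV G k X0) \<le> CARD('a) ^ (c + ?d) * card (VV G k (X0 \<union> (W \<union> S)))" .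
    have cSW: "card (S - W) \<le> card S" using fS by (intro card_mono) auto
    have A2: "c + ?d \<le> Suc m * r" using less.prems(3) cSW S(4) by simp
    have A3: "c + ?d + Suc m * (\<delta> - 1) \<le> card (W \<union> S)"
      using less.prems(4) cW st(1) unfolding SZ by simp
    have A0: "W \<union> S \<subseteq> P" using less.prems(1) S(1) by auto
    show ?thesis by (rule less.hyps[OF lt A0 A1 A2 A3])
  qed
qed

lemma loop:
  fixes G :: "nat \<Rightarrow> nat \<Rightarrow> 'a::{field,finite}"
  assumes loc: "\<forall>\<iota>\<in>{1..n}. \<exists>S. S \<subseteq> {1..n} \<and> \<iota> \<in> S \<and> \<delta> \<le> card S \<and> card S \<le> \<rho> + \<delta> - 1 \<and> regenprop G k n \<delta> S"
    and indep: "\<forall>m. (\<forall>j\<in>{1..n}. codeword G k m j = 0) \<longrightarrow> (\<forall>t<k. m t = 0)"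
    and d1: "1 \<le> \<delta>" and q2: "2 \<le> CARD('a)"
  shows "X \<subseteq> {1..n} \<Longrightarrow> CARD('a) ^ k \<le> CARD('a) ^ b * card (VV G k X) \<Longrightarrow> b \<le> k - 1 \<Longrightarrow>
    \<exists>X' b' m'. X' \<subseteq> {1..n} \<and> CARD('a) ^ k \<le> CARD('a) ^ b' * card (VV G k X') \<and> b' \<le> k - 1 \<and>
      k \<le> b' + \<rho> \<and> b' \<le> b + m' * \<rho> \<and> card X + b' + m' * (\<delta> - 1) \<le> card X' + b"
proof (induction "n - card X" arbitrary: X b rule: less_induct)
  case less
  show ?case
  proof (cases "k \<le> b + \<rho>")
    case True then show ?thesis using less.prems by (intro exI[of _ X] exI[of _ b] exI[of _ 0]) auto
  next
    case False
    have "2 \<le> card (VV G k X)" by (rule pow_card[OF q2 less.prems(2)]) (use False in simp)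
    then obtain \<iota> where iota: "\<iota> \<in> {1..n}" "\<not> detm G k X \<iota>" using no_det_exists[OF _ indep] by blast
    obtain S where S: "S \<subseteq> {1..n}" "\<iota> \<in> S" "\<delta> \<le> card S" "card S \<le> \<rho> + \<delta> - 1" "regenprop G k n \<delta> S"
      using loc iota(1) by blast
    have fS: "finite S" using S(1) by (rule finite_subset) simp
    have fX: "finite X" using less.prems(1) by (rule finite_subset) simp
    have st: "\<delta> \<le> card (S - X)"
      "card (VV G k X) \<le> CARD('a) ^ (card (S - X) - (\<delta> - 1)) * card (VV G k (X \<union> S))"
      using step[OF S(5) fS S(2) S(3) fX iota(2)] by auto
    let ?d = "card (S - X) - (\<delta> - 1)"
    have XS: "X \<union> S = X \<union> (S - X)" by auto
    have cX: "card (X \<union> S) = card X + card (S - X)"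
      unfolding XS using fX fS by (intro card_Un_disjoint) auto
    have cSX: "card (S - X) \<le> card S" using fS by (intro card_mono) auto
    have XSn: "X \<union> S \<subseteq> {1..n}" using less.prems(1) S(1) by auto
    have "card (X \<union> S) \<le> card {1..n}" using XSn by (intro card_mono) auto
    then have lt: "n - card (X \<union> S) < n - card X" using cX st(1) d1 by simp
    have "CARD('a) ^ k \<le> CARD('a) ^ b * card (VV G k X)" by (rule less.prems(2))
    also have "\<dots> \<le> CARD('a) ^ b * (CARD('a) ^ ?d * card (VV G k (X \<union> S)))"
      using st(2) by (intro mult_left_mono) auto
    also have "\<dots> = CARD('a) ^ (b + ?d) * card (VV G k (X \<union> S))"
      by (simp add: power_add)
    finally have A1: "CARD('a) ^ k \<le> CARD('a) ^ (b + ?d) * card (VV G k (X \<union> S))" .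
    have A2: "b + ?d \<le> k - 1" using False cSX S(4) by simp
    obtain X' b' m' where R: "X' \<subseteq> {1..n}" "CARD('a) ^ k \<le> CARD('a) ^ b' * card (VV G k X')"
      "b' \<le> k - 1" "k \<le> b' + \<rho>" "b' \<le> b + ?d + m' * \<rho>"
      "card (X \<union> S) + b' + m' * (\<delta> - 1) \<le> card X' + (b + ?d)"
      using less.hyps[OF lt XSn A1 A2] by blast
    have "?d \<le> \<rho>" using cSX S(4) by simp
    then have "b' \<le> b + Suc m' * \<rho>" using R(5) by simp
    moreover have "card X + b' + Suc m' * (\<delta> - 1) \<le> card X' + b"
      using R(6) cX st(1) by simp
    ultimately show ?thesis using R by blast
  qed
qed

lemma extend:
  fixes G :: "nat \<Rightarrow> nat \<Rightarrow> 'a::{field,finite}"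
  assumes indep: "\<forall>m. (\<forall>j\<in>{1..n}. codeword G k m j = 0) \<longrightarrow> (\<forall>t<k. m t = 0)"
    and q2: "2 \<le> CARD('a)" and k1: "1 \<le> k"
  shows "X \<subseteq> {1..n} \<Longrightarrow> CARD('a) ^ k \<le> CARD('a) ^ b * card (VV G k X) \<Longrightarrow> b \<le> k - 1 \<Longrightarrow>
    \<exists>Y. Y \<subseteq> {1..n} \<and> card Y = card X + (k - 1 - b) \<and> 2 \<le> card (VV G k Y)"
proof (induction "k - 1 - b" arbitrary: X b)
  case 0
  have "2 \<le> card (VV G k X)" by (rule pow_card[OF q2 0(3)]) (use 0 k1 in simp)
  then show ?case using 0 by auto
next
  case (Suc l)
  have "2 \<le> card (VV G k X)" by (rule pow_card[OF q2 Suc(4)]) (use Suc k1 in simp)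
  then obtain \<iota> where iota: "\<iota> \<in> {1..n}" "\<not> detm G k X \<iota>" using no_det_exists[OF _ indep] by blast
  have nX: "\<iota> \<notin> X" using iota(2) detm_mem by blast
  have fX: "finite X" using Suc(3) by (rule finite_subset) simp
  have "CARD('a) ^ k \<le> CARD('a) ^ b * card (VV G k X)" by (rule Suc(4))
  also have "\<dots> \<le> CARD('a) ^ b * (CARD('a) * card (VV G k (insert \<iota> X)))"
    by (intro mult_left_mono card_VV_insert) auto
  finally have A: "CARD('a) ^ k \<le> CARD('a) ^ Suc b * card (VV G k (insert \<iota> X))"
    by (simp add: ac_simps)
  have l: "l = k - 1 - Suc b" using Suc(2) by simp
  have bk: "Suc b \<le> k - 1" using Suc(2) by simp
  have Xi: "insert \<iota> X \<subseteq> {1..n}" using Suc(3) iota(1) by auto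
  obtain Y where Y: "Y \<subseteq> {1..n}" "card Y = card (insert \<iota> X) + (k - 1 - Suc b)" "2 \<le> card (VV G k Y)"
    using Suc(1)[OF l Xi A bk] by blast
  have "card (insert \<iota> X) = Suc (card X)" using fX nX by simp
  then show ?case using Y bk by (intro exI[of _ Y]) auto
qed



theorem corollary1:
  fixes G :: "nat \<Rightarrow> nat \<Rightarrow> 'a::{field,finite}"
    and n k d s \<delta> :: nat and T :: "nat \<Rightarrow> nat set" and r :: "nat \<Rightarrow> nat"
    and \<Delta> :: "nat \<Rightarrow> int"
  assumes "s \<ge> 2" and "\<delta> \<ge> 2"
    and "is_linear_code G n k d"
    and "multiple_localities G n k s T r \<delta>"
    and "\<Delta> 0 = 0"
    and "\<forall>j\<in>{1..s-1}. \<Delta> j = (\<Sum>i=1..j. \<lceil>real (card (T i)) / real (r i + \<delta> - 1)\<rceil> * (int \<delta> - 1))"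
    and "(\<Sum>i=1..s-1. int (r i) * \<lceil>real (card (T i)) / real (r i + \<delta> - 1)\<rceil>) \<le> int k - 1"
    and "\<forall>j\<in>{1..s-1}. int (r j) * \<lceil>real_of_int (\<Delta> j - \<Delta> (j-1) - 1) / real (\<delta> - 1)\<rceil>
            + (\<Delta> j - \<Delta> (j-1) - 1) < int (card (T j))"
  shows "let \<Gamma> = (\<Sum>i=1..s-1. \<lceil>real (card (T i)) / real (r i + \<delta> - 1)\<rceil>)
                 + \<lceil>real_of_int (int k - (\<Sum>i=1..s-1. int (r i) * \<lceil>real (card (T i)) / real (r i + \<delta> - 1)\<rceil>))
                      / real (r s)\<rceil>
         in int d \<le> int n - int k + 1 - (\<Gamma> - 1) * (int \<delta> - 1)"
proof -
  define f where "f = (\<lambda>i. \<lceil>real (card (T i)) / real (r i + \<delta> - 1)\<rceil>)"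
  define t where "t = (\<lambda>i. nat (f i))"
  define D where "D = \<delta> - 1"
  have d2: "2 \<le> \<delta>" using assms(2) by simp
  have d1: "1 \<le> \<delta>" using d2 by simp
  have lin: "1 \<le> k" "k \<le> n"
    and indep: "\<forall>m. (\<forall>j\<in>{1..n}. codeword G k m j = 0) \<longrightarrow> (\<forall>t<k. m t = 0)"
    and dmin: "d = Min (hweight n ` (code G k n - {\<lambda>_. 0}))"
    using assms(3) unfolding is_linear_code_def by auto
  have part: "is_partition n s T"
    and mono: "\<forall>i j. 1 \<le> i \<longrightarrow> i \<le> j \<longrightarrow> j \<le> s \<longrightarrow> r i \<le> r j"
    and loc0: "\<forall>i\<in>{1..s}. \<forall>\<iota>\<in>T i. \<exists>S. S \<subseteq> T i \<and> \<iota> \<in> S \<and> \<delta> \<le> card S \<and> card S \<le> r i + \<delta> - 1 \<and>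
        (\<forall>E. E \<subseteq> S \<longrightarrow> card E = \<delta> - 1 \<longrightarrow> (\<forall>j\<in>E. regenerating_set G k n j ((S - E) \<union> {j})))"
    using assms(4) unfolding multiple_localities_def by auto
  have ne: "\<forall>i\<in>{1..s}. T i \<noteq> {}"
    and dj: "\<forall>i\<in>{1..s}. \<forall>j\<in>{1..s}. i \<noteq> j \<longrightarrow> T i \<inter> T j = {}"
    and un: "(\<Union>i\<in>{1..s}. T i) = {1..n}"
    using part unfolding is_partition_def by auto
  have Tsub: "T i \<subseteq> {1..n}" if "i \<in> {1..s}" for i using un that by blast
  have Tfin: "finite (T i)" if "i \<in> {1..s}" for i using Tsub[OF that] finite_subset by blast
  have locP: "\<forall>\<iota>\<in>T i. \<exists>S. S \<subseteq> T i \<and> \<iota> \<in> S \<and> \<delta> \<le> card S \<and> card S \<le> r i + \<delta> - 1 \<and> regenprop G k n \<delta> S"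
    if "i \<in> {1..s}" for i
    using loc0 that unfolding regenprop_def by blast
  have q2: "2 \<le> CARD('a)"
  proof -
    have "card {0::'a, 1} \<le> CARD('a)" by (rule card_mono) auto
    then show ?thesis by simp
  qed
  have s_in: "s \<in> {1..s}" using assms(1) by simp
  have rho: "1 \<le> r s"
  proof -
    obtain \<iota> where i: "\<iota> \<in> T s" using ne s_in by blast
    from locP[OF s_in] i obtain S where "S \<subseteq> T s" "\<iota> \<in> S" "\<delta> \<le> card S" "card S \<le> r s + \<delta> - 1" "regenprop G k n \<delta> S"
      by blast
    then show ?thesis using d2 by linarith
  qed
  have glob: "\<forall>\<iota>\<in>{1..n}. \<exists>S. S \<subseteq> {1..n} \<and> \<iota> \<in> S \<and> \<delta> \<le> card S \<and> card S \<le> r s + \<delta> - 1 \<and> regenprop G k n \<delta> S"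
  proof
    fix \<iota> assume "\<iota> \<in> {1..n}"
    then obtain i where i: "i \<in> {1..s}" "\<iota> \<in> T i" using un by blast
    then obtain S where S: "S \<subseteq> T i" "\<iota> \<in> S" "\<delta> \<le> card S" "card S \<le> r i + \<delta> - 1" "regenprop G k n \<delta> S"
      using locP[OF i(1)] by blast
    have "r i \<le> r s" using mono i(1) by auto
    then show "\<exists>S. S \<subseteq> {1..n} \<and> \<iota> \<in> S \<and> \<delta> \<le> card S \<and> card S \<le> r s + \<delta> - 1 \<and> regenprop G k n \<delta> S"
      using S Tsub[OF i(1)] by (intro exI[of _ S]) auto
  qed
  have den: "0 < real (r i + \<delta> - 1)" for i using d2 by simp
  have f0: "0 \<le> f i" for i
  proof -
    have "0 \<le> real (card (T i)) / real (r i + \<delta> - 1)" by simp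
    then have "-1 < real (card (T i)) / real (r i + \<delta> - 1)" by (rule less_le_trans[rotated]) simp
    then show ?thesis unfolding f_def by simp
  qed
  have tf: "int (t i) = f i" for i using f0[of i] by (simp add: t_def)
  have F1: "card (T i) \<le> t i * (r i + D)" for i
  proof -
    have "real (card (T i)) / real (r i + \<delta> - 1) \<le> of_int (f i)" unfolding f_def by (rule le_of_int_ceiling)
    then have "real (card (T i)) \<le> of_int (f i) * real (r i + \<delta> - 1)" using den[of i] by (simp add: pos_divide_le_eq)
    also have "of_int (f i) = real (t i)" unfolding tf[symmetric] by simp
    finally have "real (card (T i)) \<le> real (t i * (r i + \<delta> - 1))" by simp
    then show ?thesis unfolding D_def using d1 by (simp only: of_nat_le_iff) simp
  qed
  have Dsum: "\<Delta> j = (\<Sum>i=1..j. f i * (int \<delta> - 1))" if "j \<le> s - 1" for j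
  proof (cases "j = 0")
    case True then show ?thesis using assms(5) by simp
  next
    case False then show ?thesis using assms(6) that unfolding f_def by auto
  qed
  have Ddiff: "\<Delta> j - \<Delta> (j-1) = f j * (int \<delta> - 1)" if j: "j \<in> {1..s-1}" for j
  proof -
    have e: "{1..j} = insert j {1..j-1}" using j by auto
    have jle: "j \<le> s - 1" using j by simp
    have jj: "j - 1 \<le> s - 1" using jle by (rule le_trans[OF diff_le_self])
    have "\<Delta> j = (\<Sum>i=1..j. f i * (int \<delta> - 1))" using Dsum j by simp
    also have "\<dots> = f j * (int \<delta> - 1) + (\<Sum>i=1..j-1. f i * (int \<delta> - 1))"
      unfolding e by (subst sum.insert) auto
    finally have 1: "\<Delta> j = f j * (int \<delta> - 1) + (\<Sum>i=1..j-1. f i * (int \<delta> - 1))" .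
    have 2: "\<Delta> (j-1) = (\<Sum>i=1..j-1. f i * (int \<delta> - 1))" using Dsum[OF jj] .
    show ?thesis using 1 2 by simp
  qed
  have F2: "r i * (t i - 1) + t i * D \<le> card (T i)" if i: "i \<in> {1..s-1}" for i
  proof -
    have iS: "i \<in> {1..s}" using i by auto
    have h: "int (r i) * \<lceil>real_of_int (\<Delta> i - \<Delta> (i-1) - 1) / real (\<delta> - 1)\<rceil> + (\<Delta> i - \<Delta> (i-1) - 1) < int (card (T i))"
      using assms(8) i by blast
    have intD: "int \<delta> - 1 = int D" unfolding D_def using d1 by simp
    have e1: "\<Delta> i - \<Delta> (i-1) - 1 = int (t i) * int D - 1" using Ddiff[OF i] tf[of i] intD by simp
    have Dpos: "1 \<le> real D" unfolding D_def using d2 by simp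
    let ?x = "real_of_int (\<Delta> i - \<Delta> (i-1) - 1) / real (\<delta> - 1)"
    have xe: "?x = real (t i) - 1 / real D" unfolding e1 D_def[symmetric] using Dpos
      by (simp add: field_simps)
    have h1: "1 / real D \<le> 1" using Dpos by simp
    define x where "x = ?x"
    define cx where "cx = \<lceil>x\<rceil>"
    have xe': "x = real (t i) - 1 / real D" unfolding x_def by (rule xe)
    have "real (t i) - 1 \<le> real (t i) - 1 / real D" using h1 by linarith
    then have "real (t i) - 1 \<le> x" unfolding xe' .
    also have "x \<le> of_int cx" unfolding cx_def by (rule le_of_int_ceiling)
    finally have "of_int (int (t i) - 1) \<le> (of_int cx :: real)" by simp
    then have c1: "int (t i) - 1 \<le> cx" by (simp only: of_int_le_iff)
    have hc: "int (r i) * cx + (int (t i) * int D - 1) < int (card (T i))"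
      using h unfolding cx_def x_def e1[symmetric] .
    have "int (r i) * (int (t i) - 1) \<le> int (r i) * cx" using c1 by (intro mult_left_mono) auto
    then have h2: "int (r i) * (int (t i) - 1) + int (t i) * int D \<le> int (card (T i))"
      using hc by linarith
    have "card (T i) \<noteq> 0" using ne iS Tfin[OF iS] by auto
    then have t1: "1 \<le> t i" using F1[of i] by (cases "t i") auto
    have eqn: "int (r i * (t i - 1) + t i * D) = int (r i) * (int (t i) - 1) + int (t i) * int D"
      using t1 by (simp add: of_nat_diff)
    have "int (r i * (t i - 1) + t i * D) \<le> int (card (T i))" unfolding eqn by (rule h2)
    then show ?thesis by (simp only: of_nat_le_iff)
  qed
  define U where "U = (\<lambda>j. \<Union>i\<in>{1..j}. T i)"
  have PH: "j \<le> s - 1 \<Longrightarrow> U j \<subseteq> {1..n} \<and> (\<exists>b. card (VV G k {}) \<le> CARD('a) ^ b * card (VV G k (U j)) \<and>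
      b \<le> (\<Sum>i=1..j. r i * t i) \<and> D * (\<Sum>i=1..j. t i) + b \<le> card (U j))" for j
  proof (induction j)
    case 0 then show ?case by (auto simp: U_def intro!: exI[of _ 0])
  next
    case (Suc j)
    from Suc.prems have jl: "j \<le> s - 1" by simp
    from Suc.IH[OF jl] obtain b where IH: "U j \<subseteq> {1..n}" "card (VV G k {}) \<le> CARD('a) ^ b * card (VV G k (U j))"
      "b \<le> (\<Sum>i=1..j. r i * t i)" "D * (\<Sum>i=1..j. t i) + b \<le> card (U j)" by blast
    have Sj: "Suc j \<in> {1..s}" "Suc j \<in> {1..s-1}" using Suc.prems by auto
    have UU: "U (Suc j) = U j \<union> T (Suc j)" by (auto simp: U_def atLeastAtMostSuc_conv)
    have disj: "U j \<inter> T (Suc j) = {}"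
    proof -
      have "T i \<inter> T (Suc j) = {}" if "i \<in> {1..j}" for i using dj Sj(1) that Suc.prems by auto
      then show ?thesis unfolding U_def by blast
    qed
    have finU: "finite (U j)" using IH(1) finite_subset by blast
    obtain c m where ph: "card (VV G k (U j)) \<le> CARD('a) ^ c * card (VV G k (U j \<union> T (Suc j)))"
      "c \<le> m * r (Suc j)" "c + m * (\<delta> - 1) \<le> card (T (Suc j))"
      using phase[OF locP[OF Sj(1)] Tfin[OF Sj(1)] finU disj d1, where W="{}" and c=0 and m=0] by auto
    have p3: "c + m * D \<le> card (T (Suc j))" using ph(3) unfolding D_def .
    have pa: "c \<le> r (Suc j) * t (Suc j) \<and> t (Suc j) * D + c \<le> card (T (Suc j))"
      by (rule phase_arith[OF ph(2) p3 F1[of "Suc j"] F2[OF Sj(2)]])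
    have "card (VV G k {}) \<le> CARD('a) ^ b * card (VV G k (U j))" by (rule IH(2))
    also have "\<dots> \<le> CARD('a) ^ b * (CARD('a) ^ c * card (VV G k (U (Suc j))))"
      using ph(1) unfolding UU by (intro mult_left_mono) auto
    also have "\<dots> = CARD('a) ^ (b + c) * card (VV G k (U (Suc j)))" by (simp add: power_add)
    finally have A1: "card (VV G k {}) \<le> CARD('a) ^ (b + c) * card (VV G k (U (Suc j)))" .
    have cU: "card (U (Suc j)) = card (U j) + card (T (Suc j))"
      unfolding UU using finU Tfin[OF Sj(1)] disj by (intro card_Un_disjoint) auto
    have s1: "(\<Sum>i=1..Suc j. r i * t i) = (\<Sum>i=1..j. r i * t i) + r (Suc j) * t (Suc j)"
      by (simp add: sum.cl_ivl_Suc)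
    have s2: "(\<Sum>i=1..Suc j. t i) = (\<Sum>i=1..j. t i) + t (Suc j)"
      by (simp add: sum.cl_ivl_Suc)
    have s3: "D * (\<Sum>i=1..Suc j. t i) = D * (\<Sum>i=1..j. t i) + t (Suc j) * D"
      unfolding s2 by (simp add: algebra_simps)
    have A2: "b + c \<le> (\<Sum>i=1..Suc j. r i * t i)" using IH(3) pa s1 by linarith
    have A3: "D * (\<Sum>i=1..Suc j. t i) + (b + c) \<le> card (U (Suc j))"
      using IH(4) pa cU s3 by linarith
    have A0: "U (Suc j) \<subseteq> {1..n}" using IH(1) Tsub[OF Sj(1)] UU by auto
    show ?case using A0 A1 A2 A3 by blast
  qed
  define R where "R = (\<Sum>i=1..s-1. r i * t i)"
  define Ts where "Ts = (\<Sum>i=1..s-1. t i)"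
  obtain b0 where B0: "U (s-1) \<subseteq> {1..n}" "card (VV G k {}) \<le> CARD('a) ^ b0 * card (VV G k (U (s-1)))"
    "b0 \<le> R" "D * Ts + b0 \<le> card (U (s-1))"
    using PH[OF le_refl] unfolding R_def Ts_def by blast
  have intR: "int R = (\<Sum>i=1..s-1. int (r i) * f i)" unfolding R_def by (simp add: tf[symmetric])
  have intTs: "int Ts = (\<Sum>i=1..s-1. f i)" unfolding Ts_def by (simp add: tf[symmetric])
  have Rk0: "int R \<le> int k - 1" unfolding intR f_def using assms(7) by simp
  have Rk: "R \<le> k - 1" using Rk0 by linarith
  have cV0: "card (VV G k {}) = CARD('a) ^ k" by (simp add: VV_empty card_Msg)
  have pre: "CARD('a) ^ k \<le> CARD('a) ^ b0 * card (VV G k (U (s-1)))" using B0(2) cV0 by simp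
  have b0k: "b0 \<le> k - 1" using B0(3) Rk by (rule le_trans)
  from loop[OF glob indep d1 q2 B0(1) pre b0k]
  obtain X1 b1 m where L: "X1 \<subseteq> {1..n}" "CARD('a) ^ k \<le> CARD('a) ^ b1 * card (VV G k X1)" "b1 \<le> k - 1"
      "k \<le> b1 + r s" "b1 \<le> b0 + m * r s" "card (U (s-1)) + b1 + m * (\<delta> - 1) \<le> card X1 + b0"
    by blast
  obtain Y where Y: "Y \<subseteq> {1..n}" "card Y = card X1 + (k - 1 - b1)" "2 \<le> card (VV G k Y)"
    using extend[OF indep q2 lin(1) L(1,2,3)] by blast
  have "\<exists>m\<in>VV G k Y. m \<noteq> (\<lambda>_. 0)"
  proof (rule ccontr)
    assume "\<not> ?thesis"
    then have sub0: "VV G k Y \<subseteq> {\<lambda>_. 0}" by auto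
    have "card (VV G k Y) \<le> card {(\<lambda>_. 0) :: nat \<Rightarrow> 'a}" by (rule card_mono) (simp_all add: sub0)
    then have "card (VV G k Y) \<le> 1" by simp
    then show False using Y(3) by simp
  qed
  then obtain mm where mm: "mm \<in> VV G k Y" "mm \<noteq> (\<lambda>_. 0)" by blast
  define cw where "cw = (\<lambda>j. if j \<in> {1..n} then codeword G k mm j else 0)"
  have cw_code: "cw \<in> code G k n" unfolding code_def cw_def by (intro CollectI exI[of _ mm]) simp
  have cw_nz: "cw \<noteq> (\<lambda>_. 0)"
  proof
    assume "cw = (\<lambda>_. 0)"
    then have "\<forall>j\<in>{1..n}. codeword G k mm j = 0" unfolding cw_def by (auto simp: fun_eq_iff split: if_splits)
    then have A: "\<forall>t<k. mm t = 0" using indep by blast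
    have B: "\<forall>t. k \<le> t \<longrightarrow> mm t = 0" using mm(1) by (auto simp: VV_def Msg_def)
    have "mm = (\<lambda>_. 0)"
    proof (rule ext)
      fix t show "mm t = 0" using A B by (cases "t < k") auto
    qed
    then show False using mm(2) by simp
  qed
  have hw_le: "hweight n c \<le> n" for c :: "nat \<Rightarrow> 'a"
  proof -
    have "card {j \<in> {1..n}. c j \<noteq> 0} \<le> card {1..n}" by (rule card_mono) auto
    then show ?thesis unfolding hweight_def by simp
  qed
  have fin: "finite (hweight n ` (code G k n - {\<lambda>_. 0}))"
    by (rule finite_subset[of _ "{..n}"]) (use hw_le in auto)
  have mem: "hweight n cw \<in> hweight n ` (code G k n - {\<lambda>_. 0})" using cw_code cw_nz by blast
  have "d \<le> hweight n cw" unfolding dmin by (rule Min_le[OF fin mem])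
  also have "hweight n cw \<le> card ({1..n} - Y)"
    unfolding hweight_def cw_def using mm(1) by (intro card_mono) (auto simp: VV_def)
  also have "\<dots> = n - card Y" using Y(1) by (simp add: card_Diff_subset finite_subset)
  finally have dY: "d \<le> n - card Y" .
  have cYn: "card Y \<le> n" using card_mono[OF _ Y(1)] by simp
  have key: "D * Ts + m * D + k - 1 \<le> card Y"
    using B0(4) L(6)[folded D_def] Y(2) L(3) lin(1) by linarith
  have ceil: "\<lceil>real_of_int (int k - int R) / real (r s)\<rceil> \<le> int m + 1"
  proof -
    have mm1: "(m + 1) * r s = r s + m * r s" by simp
    have "k \<le> R + (m + 1) * r s" using L(4) L(5) B0(3) mm1 by linarith
    then have "int k \<le> int R + int ((m + 1) * r s)" by (simp only: of_nat_add[symmetric] of_nat_le_iff)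
    then have "int k - int R \<le> int ((m + 1) * r s)" by linarith
    then have "real_of_int (int k - int R) \<le> real_of_int (int ((m + 1) * r s))" by (simp only: of_int_le_iff)
    then have "real_of_int (int k - int R) \<le> real (m + 1) * real (r s)" by (simp only: of_int_of_nat_eq of_nat_mult of_int_mult)
    moreover have rpos: "0 < real (r s)" using rho by simp
    ultimately have "real_of_int (int k - int R) / real (r s) \<le> real (m + 1)"
      by (simp only: pos_divide_le_eq[OF rpos])
    then show ?thesis by (simp add: ceiling_le_iff)
  qed
  have intD: "int \<delta> - 1 = int D" unfolding D_def using d1 by simp
  define \<Gamma> where "\<Gamma> = (\<Sum>i=1..s-1. f i) + \<lceil>real_of_int (int k - (\<Sum>i=1..s-1. int (r i) * f i)) / real (r s)\<rceil>"
  have G1: "\<Gamma> - 1 \<le> int Ts + int m" unfolding \<Gamma>_def intR[symmetric] intTs[symmetric] using ceil by linarith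
  have "(\<Gamma> - 1) * (int \<delta> - 1) \<le> (int Ts + int m) * int D"
    unfolding intD by (rule mult_right_mono[OF G1]) simp
  moreover have "int d \<le> int n - int k + 1 - (int Ts + int m) * int D"
  proof -
    have k1: "int (D * Ts + m * D + k - 1) \<le> int (card Y)" using key by (simp only: of_nat_le_iff)
    have eqK: "int (D * Ts + m * D + k - 1) = int D * int Ts + int m * int D + int k - 1"
      using lin(1) by (simp add: of_nat_diff)
    have "int d \<le> int n - int (card Y)" using dY cYn by simp
    moreover have "int D * int Ts + int m * int D + int k - 1 \<le> int (card Y)" using k1 unfolding eqK .
    moreover have "(int Ts + int m) * int D = int D * int Ts + int m * int D" by (simp add: algebra_simps)
    ultimately show ?thesis by linarith
  qed
  ultimately have "int d \<le> int n - int k + 1 - (\<Gamma> - 1) * (int \<delta> - 1)" by linarith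
  then show ?thesis unfolding Let_def \<Gamma>_def f_def by simp
qed

end
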